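(* Let $\mathbf L=(L,\vee,\wedge)$ be a partial lattice and $E\in\operatorname{Con}\mathbf L$. Then $\mathbf L/E:=(L/E,\vee,\wedge)$ is a partial lattice.
   Context: A partial lattice is a set $L$ with two partial binary operations $\vee,\wedge$ satisfying the strong identities $x\vee x\stackrel{s}{\approx}x$, $x\wedge x\stackrel{s}{\approx}x$, $x\vee y\stackrel{s}{\approx}y\vee x$, $x\wedge y\stackrel{s}{\approx}y\wedge x$, $(x\vee y)\vee z\stackrel{s}{\approx}x\vee(y\vee z)$, $(x\wedge y)\wedge z\stackrel{s}{\approx}x\wedge(y\wedge z)$ (for every assignment, one side is defined iff the other is, and then they are equal) and the duality conditions: if $a\vee b$ is defined and equals $a$ then $a\wedge b$ is defined and equals $b$; if $a\wedge b$ is defined and equals $a$ then $a\vee b$ is defined and equals $b$. Its induced order is $x\leq y$ iff $x\vee y$ is defined and equals $y$. The two-point extension $\mathbf L^*=(L^*,\leq^* )$, with new elements $0,1\notin L$: $L^*$ is $L$ together with a new top element $1$ if $\vee$ is not everywhere defined and a new bottom element $0$ if $\wedge$ is not everywhere defined; $\leq^*$ extends $\leq$ by putting $0$ below and $1$ above all elements; it is a lattice with operations $\vee^*=\sup_{\leq^*}$, $\wedge^*=\inf_{\leq^*}$. A congruence on $\mathbf L$ is an equivalence relation $E$ on $L$ with $\Theta(E)\cap L^2=E$, where $\Theta(E)$ is the lattice congruence on $\mathbf L^*$ generated by $E$; $\operatorname{Con}\mathbf L$ is the set of these. For $E\in\operatorname{Con}\mathbf L$ the partial operations on $L/E$ are: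 $[x]E\vee[y]E:=[x\vee^*y]\Theta(E)\cap L$ if this set is non-empty, undefined otherwise; $[x]E\wedge[y]E:=[x\wedge^*y]\Theta(E)\cap L$ if this set is non-empty, undefined otherwise (these are well defined). *)

theory Defs
  imports Main
begin

text \<open>A partial binary operation on a carrier set L is modelled as a function
  into option; None means "undefined". Only arguments from L matter.\<close>

definition partial_lattice ::
  "'a set \<Rightarrow> ('a \<Rightarrow> 'a \<Rightarrow> 'a option) \<Rightarrow> ('a \<Rightarrow> 'a \<Rightarrow> 'a option) \<Rightarrow> bool" where
  "partial_lattice L J M \<longleftrightarrow>
     (\<forall>x\<in>L. \<forall>y\<in>L. \<forall>z. J x y = Some z \<longrightarrow> z \<in> L) \<and>
     (\<forall>x\<in>L. \<forall>y\<in>L. \<forall>z. M x y = Some z \<longrightarrow> z \<in> L) \<and>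
     (\<forall>x\<in>L. J x x = Some x) \<and>
     (\<forall>x\<in>L. M x x = Some x) \<and>
     (\<forall>x\<in>L. \<forall>y\<in>L. J x y = J y x) \<and>
     (\<forall>x\<in>L. \<forall>y\<in>L. M x y = M y x) \<and>
     (\<forall>x\<in>L. \<forall>y\<in>L. \<forall>z\<in>L.
        Option.bind (J x y) (\<lambda>u. J u z) = Option.bind (J y z) (\<lambda>v. J x v)) \<and>
     (\<forall>x\<in>L. \<forall>y\<in>L. \<forall>z\<in>L.
        Option.bind (M x y) (\<lambda>u. M u z) = Option.bind (M y z) (\<lambda>v. M x v)) \<and>
     (\<forall>a\<in>L. \<forall>b\<in>L. J a b = Some a \<longrightarrow> M a b = Some b) \<and>
     (\<forall>a\<in>L. \<forall>b\<in>L. M a b = Some a \<longrightarrow> J a b = Some b)"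

datatype 'a ext = Bot | Elt 'a | Top

definition total_op :: "'a set \<Rightarrow> ('a \<Rightarrow> 'a \<Rightarrow> 'a option) \<Rightarrow> bool" where
  "total_op L F \<longleftrightarrow> (\<forall>x\<in>L. \<forall>y\<in>L. F x y \<noteq> None)"

definition ext_carrier ::
  "'a set \<Rightarrow> ('a \<Rightarrow> 'a \<Rightarrow> 'a option) \<Rightarrow> ('a \<Rightarrow> 'a \<Rightarrow> 'a option) \<Rightarrow> 'a ext set" where
  "ext_carrier L J M = Elt ` L \<union> (if total_op L J then {} else {Top})
                              \<union> (if total_op L M then {} else {Bot})"

fun ext_le :: "('a \<Rightarrow> 'a \<Rightarrow> 'a option) \<Rightarrow> 'a ext \<Rightarrow> 'a ext \<Rightarrow> bool" where
  "ext_le J Bot _ = True"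
| "ext_le J _ Top = True"
| "ext_le J (Elt x) (Elt y) = (J x y = Some y)"
| "ext_le J _ _ = False"

definition ext_sup ::
  "'a set \<Rightarrow> ('a \<Rightarrow> 'a \<Rightarrow> 'a option) \<Rightarrow> ('a \<Rightarrow> 'a \<Rightarrow> 'a option) \<Rightarrow> 'a ext \<Rightarrow> 'a ext \<Rightarrow> 'a ext" where
  "ext_sup L J M a b = (THE c. c \<in> ext_carrier L J M \<and> ext_le J a c \<and> ext_le J b c \<and>
      (\<forall>d\<in>ext_carrier L J M. ext_le J a d \<and> ext_le J b d \<longrightarrow> ext_le J c d))"

definition ext_inf ::
  "'a set \<Rightarrow> ('a \<Rightarrow> 'a \<Rightarrow> 'a option) \<Rightarrow> ('a \<Rightarrow> 'a \<Rightarrow> 'a option) \<Rightarrow> 'a ext \<Rightarrow> 'a ext \<Rightarrow> 'a ext" where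
  "ext_inf L J M a b = (THE c. c \<in> ext_carrier L J M \<and> ext_le J c a \<and> ext_le J c b \<and>
      (\<forall>d\<in>ext_carrier L J M. ext_le J d a \<and> ext_le J d b \<longrightarrow> ext_le J d c))"

definition ext_lattice_cong ::
  "'a set \<Rightarrow> ('a \<Rightarrow> 'a \<Rightarrow> 'a option) \<Rightarrow> ('a \<Rightarrow> 'a \<Rightarrow> 'a option) \<Rightarrow> ('a ext \<times> 'a ext) set \<Rightarrow> bool" where
  "ext_lattice_cong L J M T \<longleftrightarrow> equiv (ext_carrier L J M) T \<and>
     (\<forall>a a' b b'. (a, a') \<in> T \<and> (b, b') \<in> T \<longrightarrow>
        (ext_sup L J M a b, ext_sup L J M a' b') \<in> T \<and>
        (ext_inf L J M a b, ext_inf L J M a' b') \<in> T)"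

definition Theta ::
  "'a set \<Rightarrow> ('a \<Rightarrow> 'a \<Rightarrow> 'a option) \<Rightarrow> ('a \<Rightarrow> 'a \<Rightarrow> 'a option) \<Rightarrow> ('a \<times> 'a) set
     \<Rightarrow> ('a ext \<times> 'a ext) set" where
  "Theta L J M E = \<Inter> {T. ext_lattice_cong L J M T \<and> (\<lambda>(x, y). (Elt x, Elt y)) ` E \<subseteq> T}"

definition Con ::
  "'a set \<Rightarrow> ('a \<Rightarrow> 'a \<Rightarrow> 'a option) \<Rightarrow> ('a \<Rightarrow> 'a \<Rightarrow> 'a option) \<Rightarrow> ('a \<times> 'a) set set" where
  "Con L J M = {E. equiv L E \<and> {(x, y). (Elt x, Elt y) \<in> Theta L J M E} = E}"

text \<open>Operations of L/E on classes: [x]E \<or> [y]E := [x \<or>* y]\<Theta>(E) \<inter> L if nonempty.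
  Representatives are chosen by SOME (the paper asserts well-definedness).\<close>
definition quot_join ::
  "'a set \<Rightarrow> ('a \<Rightarrow> 'a \<Rightarrow> 'a option) \<Rightarrow> ('a \<Rightarrow> 'a \<Rightarrow> 'a option) \<Rightarrow> ('a \<times> 'a) set
     \<Rightarrow> 'a set \<Rightarrow> 'a set \<Rightarrow> 'a set option" where
  "quot_join L J M E A B =
     (if A \<in> L // E \<and> B \<in> L // E then
        (let x = (SOME x. x \<in> A); y = (SOME y. y \<in> B);
             C = {z \<in> L. (ext_sup L J M (Elt x) (Elt y), Elt z) \<in> Theta L J M E}
         in if C = {} then None else Some C)
      else None)"

definition quot_meet ::
  "'a set \<Rightarrow> ('a \<Rightarrow> 'a \<Rightarrow> 'a option) \<Rightarrow> ('a \<Rightarrow> 'a \<Rightarrow> 'a option) \<Rightarrow> ('a \<times> 'a) set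
     \<Rightarrow> 'a set \<Rightarrow> 'a set \<Rightarrow> 'a set option" where
  "quot_meet L J M E A B =
     (if A \<in> L // E \<and> B \<in> L // E then
        (let x = (SOME x. x \<in> A); y = (SOME y. y \<in> B);
             C = {z \<in> L. (ext_inf L J M (Elt x) (Elt y), Elt z) \<in> Theta L J M E}
         in if C = {} then None else Some C)
      else None)"

end

theory Submission
  imports Defs
begin

definition islub where
  "islub L J M a b c \<longleftrightarrow> c \<in> ext_carrier L J M \<and> ext_le J a c \<and> ext_le J b c \<and>
      (\<forall>d\<in>ext_carrier L J M. ext_le J a d \<and> ext_le J b d \<longrightarrow> ext_le J c d)"

definition isglb where
  "isglb L J M a b c \<longleftrightarrow> c \<in> ext_carrier L J M \<and> ext_le J c a \<and> ext_le J c b \<and>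
      (\<forall>d\<in>ext_carrier L J M. ext_le J d a \<and> ext_le J d b \<longrightarrow> ext_le J d c)"

context
  fixes L :: "'a set" and J M :: "'a \<Rightarrow> 'a \<Rightarrow> 'a option"
  assumes PL: "partial_lattice L J M"
begin

lemma closJ: "x \<in> L \<Longrightarrow> y \<in> L \<Longrightarrow> J x y = Some z \<Longrightarrow> z \<in> L"
  using PL unfolding partial_lattice_def by (metis (no_types, lifting))
lemma closM: "x \<in> L \<Longrightarrow> y \<in> L \<Longrightarrow> M x y = Some z \<Longrightarrow> z \<in> L"
  using PL unfolding partial_lattice_def by (metis (no_types, lifting))
lemma idJ: "x \<in> L \<Longrightarrow> J x x = Some x"
  using PL unfolding partial_lattice_def by (metis (no_types, lifting))
lemma idM: "x \<in> L \<Longrightarrow> M x x = Some x"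
  using PL unfolding partial_lattice_def by (metis (no_types, lifting))
lemma commJ: "x \<in> L \<Longrightarrow> y \<in> L \<Longrightarrow> J x y = J y x"
  using PL unfolding partial_lattice_def by (metis (no_types, lifting))
lemma commM: "x \<in> L \<Longrightarrow> y \<in> L \<Longrightarrow> M x y = M y x"
  using PL unfolding partial_lattice_def by (metis (no_types, lifting))
lemma assocJ: "x \<in> L \<Longrightarrow> y \<in> L \<Longrightarrow> z \<in> L \<Longrightarrow>
   Option.bind (J x y) (\<lambda>u. J u z) = Option.bind (J y z) (\<lambda>v. J x v)"
  using PL unfolding partial_lattice_def by (metis (no_types, lifting))
lemma assocM: "x \<in> L \<Longrightarrow> y \<in> L \<Longrightarrow> z \<in> L \<Longrightarrow>
   Option.bind (M x y) (\<lambda>u. M u z) = Option.bind (M y z) (\<lambda>v. M x v)"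
  using PL unfolding partial_lattice_def by (metis (no_types, lifting))
lemma dual1: "a \<in> L \<Longrightarrow> b \<in> L \<Longrightarrow> J a b = Some a \<Longrightarrow> M a b = Some b"
  using PL unfolding partial_lattice_def by (metis (no_types, lifting))
lemma dual2: "a \<in> L \<Longrightarrow> b \<in> L \<Longrightarrow> M a b = Some a \<Longrightarrow> J a b = Some b"
  using PL unfolding partial_lattice_def by (metis (no_types, lifting))

lemma leM: "x \<in> L \<Longrightarrow> y \<in> L \<Longrightarrow> J x y = Some y \<longleftrightarrow> M x y = Some x"
  using dual1[of y x] dual2[of x y] commJ[of x y] commM[of x y] by auto

lemma le_antisym: "x \<in> L \<Longrightarrow> y \<in> L \<Longrightarrow> J x y = Some y \<Longrightarrow> J y x = Some x \<Longrightarrow> x = y"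
  using commJ[of x y] by simp

lemma le_trans: "x \<in> L \<Longrightarrow> y \<in> L \<Longrightarrow> z \<in> L \<Longrightarrow> J x y = Some y \<Longrightarrow> J y z = Some z \<Longrightarrow> J x z = Some z"
  using assocJ[of x y z] by simp

lemma join_ub1: "x \<in> L \<Longrightarrow> y \<in> L \<Longrightarrow> J x y = Some z \<Longrightarrow> J x z = Some z"
  using assocJ[of x x y] idJ[of x] by simp
lemma join_ub2: "x \<in> L \<Longrightarrow> y \<in> L \<Longrightarrow> J x y = Some z \<Longrightarrow> J y z = Some z"
  using assocJ[of x y y] idJ[of y] commJ[of y z] closJ[of x y z] by simp
lemma join_least: "x \<in> L \<Longrightarrow> y \<in> L \<Longrightarrow> d \<in> L \<Longrightarrow> J x y = Some z \<Longrightarrow> J x d = Some d \<Longrightarrow> J y d = Some d \<Longrightarrow> J z d = Some d"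
  using assocJ[of x y d] by simp
lemma join_none: "x \<in> L \<Longrightarrow> y \<in> L \<Longrightarrow> d \<in> L \<Longrightarrow> J x y = None \<Longrightarrow> J x d = Some d \<Longrightarrow> J y d = Some d \<Longrightarrow> False"
  using assocJ[of x y d] by simp

lemma meet_lb1: "x \<in> L \<Longrightarrow> y \<in> L \<Longrightarrow> M x y = Some z \<Longrightarrow> M z x = Some z"
  using assocM[of y x x] idM[of x] commM[of x y] by simp
lemma meet_lb2: "x \<in> L \<Longrightarrow> y \<in> L \<Longrightarrow> M x y = Some z \<Longrightarrow> M z y = Some z"
  using assocM[of x y y] idM[of y] by simp
lemma meet_greatest: "x \<in> L \<Longrightarrow> y \<in> L \<Longrightarrow> d \<in> L \<Longrightarrow> M x y = Some z \<Longrightarrow> M d x = Some d \<Longrightarrow> M d y = Some d \<Longrightarrow> M d z = Some d"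
  using assocM[of d x y] by simp
lemma meet_none: "x \<in> L \<Longrightarrow> y \<in> L \<Longrightarrow> d \<in> L \<Longrightarrow> M x y = None \<Longrightarrow> M d x = Some d \<Longrightarrow> M d y = Some d \<Longrightarrow> False"
  using assocM[of d x y] by simp


lemma elt_in_C: "Elt x \<in> ext_carrier L J M \<longleftrightarrow> x \<in> L"
  unfolding ext_carrier_def by auto

lemma top_in_C: "Top \<in> ext_carrier L J M \<longleftrightarrow> \<not> total_op L J"
  unfolding ext_carrier_def by auto

lemma bot_in_C: "Bot \<in> ext_carrier L J M \<longleftrightarrow> \<not> total_op L M"
  unfolding ext_carrier_def by auto

lemma C_cases: "a \<in> ext_carrier L J M \<Longrightarrow> (a = Bot \<Longrightarrow> P) \<Longrightarrow> (a = Top \<Longrightarrow> P) \<Longrightarrow> (\<And>x. a = Elt x \<Longrightarrow> x \<in> L \<Longrightarrow> P) \<Longrightarrow> P"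
  by (cases a) (auto simp: elt_in_C)

lemma le_Top[simp]: "ext_le J a Top"
  by (cases a) auto

lemma Top_le[simp]: "ext_le J Top a \<longleftrightarrow> a = Top"
  by (cases a) auto

lemma le_Bot[simp]: "ext_le J a Bot \<longleftrightarrow> a = Bot"
  by (cases a) auto

lemma xle_refl: "a \<in> ext_carrier L J M \<Longrightarrow> ext_le J a a"
  by (erule C_cases) (auto simp: idJ)

lemma xle_antisym: "a \<in> ext_carrier L J M \<Longrightarrow> b \<in> ext_carrier L J M \<Longrightarrow> ext_le J a b \<Longrightarrow> ext_le J b a \<Longrightarrow> a = b"
  by (erule C_cases; erule C_cases) (auto intro: le_antisym)

lemma xle_trans: "a \<in> ext_carrier L J M \<Longrightarrow> b \<in> ext_carrier L J M \<Longrightarrow> c \<in> ext_carrier L J M \<Longrightarrow> ext_le J a b \<Longrightarrow> ext_le J b c \<Longrightarrow> ext_le J a c"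
  by (erule C_cases; erule C_cases; erule C_cases) (auto intro: le_trans)

lemma lub_some: assumes x: "x \<in> L" and y: "y \<in> L" and S: "J x y = Some z"
  shows "islub L J M (Elt x) (Elt y) (Elt z)"
proof -
  have z: "z \<in> L" using closJ x y S by blast
  have "ext_le J (Elt z) d" if d: "d \<in> ext_carrier L J M" "ext_le J (Elt x) d" "ext_le J (Elt y) d" for d
    using d(1)
  proof (rule C_cases)
    fix w assume "d = Elt w" "w \<in> L" thus ?thesis using d join_least[OF x y _ S] by simp
  qed (use d in auto)
  thus ?thesis unfolding islub_def using z elt_in_C join_ub1[OF x y S] join_ub2[OF x y S] by simp
qed

lemma lub_none: assumes x: "x \<in> L" and y: "y \<in> L" and S: "J x y = None"
  shows "islub L J M (Elt x) (Elt y) Top"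
proof -
  have T: "Top \<in> ext_carrier L J M" using x y S by (auto simp: top_in_C total_op_def)
  have "ext_le J Top d" if d: "d \<in> ext_carrier L J M" "ext_le J (Elt x) d" "ext_le J (Elt y) d" for d
    using d(1)
  proof (rule C_cases)
    fix w assume "d = Elt w" "w \<in> L" thus ?thesis using d join_none[OF x y _ S] by simp
  qed (use d in auto)
  thus ?thesis unfolding islub_def using T by simp
qed

lemma glb_some: assumes x: "x \<in> L" and y: "y \<in> L" and S: "M x y = Some z"
  shows "isglb L J M (Elt x) (Elt y) (Elt z)"
proof -
  have z: "z \<in> L" using closM x y S by blast
  have "ext_le J d (Elt z)" if d: "d \<in> ext_carrier L J M" "ext_le J d (Elt x)" "ext_le J d (Elt y)" for d
    using d(1)
  proof (rule C_cases)
    fix w assume w: "d = Elt w" "w \<in> L"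
    hence "M w x = Some w" "M w y = Some w" using d leM x y by auto
    hence "M w z = Some w" using meet_greatest[OF x y w(2) S] by simp
    thus ?thesis using w leM z by simp
  qed (use d in auto)
  moreover have "ext_le J (Elt z) (Elt x)" "ext_le J (Elt z) (Elt y)"
    using meet_lb1[OF x y S] meet_lb2[OF x y S] leM x y z by auto
  ultimately show ?thesis unfolding isglb_def using z elt_in_C by simp
qed

lemma glb_none: assumes x: "x \<in> L" and y: "y \<in> L" and S: "M x y = None"
  shows "isglb L J M (Elt x) (Elt y) Bot"
proof -
  have T: "Bot \<in> ext_carrier L J M" using x y S by (auto simp: bot_in_C total_op_def)
  have "ext_le J d Bot" if d: "d \<in> ext_carrier L J M" "ext_le J d (Elt x)" "ext_le J d (Elt y)" for d
    using d(1)
  proof (rule C_cases)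
    fix w assume w: "d = Elt w" "w \<in> L"
    hence "M w x = Some w" "M w y = Some w" using d leM x y by auto
    thus ?thesis using meet_none[OF x y w(2) S] by simp
  qed (use d in auto)
  thus ?thesis unfolding isglb_def using T by simp
qed

lemma lub_ex: assumes A: "a \<in> ext_carrier L J M" and B: "b \<in> ext_carrier L J M" shows "\<exists>c. islub L J M a b c"
proof (rule C_cases[OF A])
  assume "a = Bot" thus ?thesis using A B xle_refl[OF B]
    unfolding islub_def by (intro exI[of _ b]) auto
next
  assume "a = Top" thus ?thesis using A B
    unfolding islub_def by (intro exI[of _ Top]) auto
next
  fix x assume a: "a = Elt x" "x \<in> L"
  show ?thesis using B
  proof (rule C_cases)
    assume "b = Bot" thus ?thesis using A xle_refl[OF A] unfolding islub_def by (intro exI[of _ a]) auto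
  next
    assume "b = Top" thus ?thesis using B unfolding islub_def by (intro exI[of _ Top]) auto
  next
    fix y assume bb: "b = Elt y" "y \<in> L"
    show ?thesis
      using lub_some[OF a(2) bb(2)] lub_none[OF a(2) bb(2)] a bb by (cases "J x y") auto
  qed
qed

lemma glb_ex: assumes A: "a \<in> ext_carrier L J M" and B: "b \<in> ext_carrier L J M" shows "\<exists>c. isglb L J M a b c"
proof (rule C_cases[OF A])
  assume "a = Bot" thus ?thesis using A B
    unfolding isglb_def by (intro exI[of _ Bot]) auto
next
  assume "a = Top" thus ?thesis using A B xle_refl[OF B]
    unfolding isglb_def by (intro exI[of _ b]) auto
next
  fix x assume a: "a = Elt x" "x \<in> L"
  show ?thesis using B
  proof (rule C_cases)
    assume "b = Bot" thus ?thesis using B unfolding isglb_def by (intro exI[of _ Bot]) auto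
  next
    assume "b = Top" thus ?thesis using A xle_refl[OF A] unfolding isglb_def by (intro exI[of _ a]) auto
  next
    fix y assume bb: "b = Elt y" "y \<in> L"
    show ?thesis
      using glb_some[OF a(2) bb(2)] glb_none[OF a(2) bb(2)] a bb by (cases "M x y") auto
  qed
qed

lemma lub_unique: "islub L J M a b c \<Longrightarrow> islub L J M a b c' \<Longrightarrow> c = c'"
  unfolding islub_def using xle_antisym by blast

lemma glb_unique: "isglb L J M a b c \<Longrightarrow> isglb L J M a b c' \<Longrightarrow> c = c'"
  unfolding isglb_def using xle_antisym by blast

lemma sup_eq: assumes "islub L J M a b c" shows "ext_sup L J M a b = c"
proof -
  have "ext_sup L J M a b = (THE c. islub L J M a b c)" by (simp add: ext_sup_def islub_def)
  also have "\<dots> = c" using assms lub_unique by (intro the_equality) auto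
  finally show ?thesis .
qed

lemma inf_eq: assumes "isglb L J M a b c" shows "ext_inf L J M a b = c"
proof -
  have "ext_inf L J M a b = (THE c. isglb L J M a b c)" by (simp add: ext_inf_def isglb_def)
  also have "\<dots> = c" using assms glb_unique by (intro the_equality) auto
  finally show ?thesis .
qed

lemma sup_lub: "a \<in> ext_carrier L J M \<Longrightarrow> b \<in> ext_carrier L J M \<Longrightarrow> islub L J M a b (ext_sup L J M a b)"
  using lub_ex sup_eq by metis

lemma inf_glb: "a \<in> ext_carrier L J M \<Longrightarrow> b \<in> ext_carrier L J M \<Longrightarrow> isglb L J M a b (ext_inf L J M a b)"
  using glb_ex inf_eq by metis

lemma sup_in: "a \<in> ext_carrier L J M \<Longrightarrow> b \<in> ext_carrier L J M \<Longrightarrow> ext_sup L J M a b \<in> ext_carrier L J M"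
  using sup_lub unfolding islub_def by blast

lemma inf_in: "a \<in> ext_carrier L J M \<Longrightarrow> b \<in> ext_carrier L J M \<Longrightarrow> ext_inf L J M a b \<in> ext_carrier L J M"
  using inf_glb unfolding isglb_def by blast

lemma sup_comm: "a \<in> ext_carrier L J M \<Longrightarrow> b \<in> ext_carrier L J M \<Longrightarrow> ext_sup L J M a b = ext_sup L J M b a"
  using sup_lub[of b a] by (intro sup_eq) (auto simp: islub_def)

lemma inf_comm: "a \<in> ext_carrier L J M \<Longrightarrow> b \<in> ext_carrier L J M \<Longrightarrow> ext_inf L J M a b = ext_inf L J M b a"
  using inf_glb[of b a] by (intro inf_eq) (auto simp: isglb_def)

lemma sup_idem: "a \<in> ext_carrier L J M \<Longrightarrow> ext_sup L J M a a = a"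
  using xle_refl by (intro sup_eq) (auto simp: islub_def)

lemma inf_idem: "a \<in> ext_carrier L J M \<Longrightarrow> ext_inf L J M a a = a"
  using xle_refl by (intro inf_eq) (auto simp: isglb_def)

lemma sup_assoc: assumes a: "a \<in> ext_carrier L J M" and b: "b \<in> ext_carrier L J M" and c: "c \<in> ext_carrier L J M"
  shows "ext_sup L J M (ext_sup L J M a b) c = ext_sup L J M a (ext_sup L J M b c)"
proof -
  let ?ab = "ext_sup L J M a b" let ?bc = "ext_sup L J M b c" let ?t = "ext_sup L J M ?ab c"
  have ab: "islub L J M a b ?ab" using sup_lub a b by blast
  have bc: "islub L J M b c ?bc" using sup_lub b c by blast
  have abC: "?ab \<in> ext_carrier L J M" using ab islub_def by blast
  have bcC: "?bc \<in> ext_carrier L J M" using bc islub_def by blast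
  have t: "islub L J M ?ab c ?t" using sup_lub abC c by blast
  have tC: "?t \<in> ext_carrier L J M" using t islub_def by blast
  have 1: "ext_le J a ?t" using xle_trans[OF a abC tC] ab t unfolding islub_def by blast
  have 2: "ext_le J b ?t" using xle_trans[OF b abC tC] ab t unfolding islub_def by blast
  have 3: "ext_le J c ?t" using t unfolding islub_def by blast
  have 4: "ext_le J ?bc ?t" using bc 2 3 tC unfolding islub_def by blast
  have 5: "ext_le J ?t d" if d: "d \<in> ext_carrier L J M" "ext_le J a d" "ext_le J ?bc d" for d
  proof -
    have "ext_le J b d" "ext_le J c d" using xle_trans[OF b bcC d(1)] xle_trans[OF c bcC d(1)] bc d
      unfolding islub_def by blast+
    hence "ext_le J ?ab d" using ab d unfolding islub_def by blast
    thus ?thesis using t d \<open>ext_le J c d\<close> unfolding islub_def by blast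
  qed
  have "islub L J M a ?bc ?t" unfolding islub_def using tC 1 4 5 by blast
  thus ?thesis using sup_eq by simp
qed

lemma inf_assoc: assumes a: "a \<in> ext_carrier L J M" and b: "b \<in> ext_carrier L J M" and c: "c \<in> ext_carrier L J M"
  shows "ext_inf L J M (ext_inf L J M a b) c = ext_inf L J M a (ext_inf L J M b c)"
proof -
  let ?ab = "ext_inf L J M a b" let ?bc = "ext_inf L J M b c" let ?t = "ext_inf L J M ?ab c"
  have ab: "isglb L J M a b ?ab" using inf_glb a b by blast
  have bc: "isglb L J M b c ?bc" using inf_glb b c by blast
  have abC: "?ab \<in> ext_carrier L J M" using ab isglb_def by blast
  have bcC: "?bc \<in> ext_carrier L J M" using bc isglb_def by blast
  have t: "isglb L J M ?ab c ?t" using inf_glb abC c by blast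
  have tC: "?t \<in> ext_carrier L J M" using t isglb_def by blast
  have 1: "ext_le J ?t a" using xle_trans[OF tC abC a] ab t unfolding isglb_def by blast
  have 2: "ext_le J ?t b" using xle_trans[OF tC abC b] ab t unfolding isglb_def by blast
  have 3: "ext_le J ?t c" using t unfolding isglb_def by blast
  have 4: "ext_le J ?t ?bc" using bc 2 3 tC unfolding isglb_def by blast
  have 5: "ext_le J d ?t" if d: "d \<in> ext_carrier L J M" "ext_le J d a" "ext_le J d ?bc" for d
  proof -
    have "ext_le J d b" "ext_le J d c" using xle_trans[OF d(1) bcC b] xle_trans[OF d(1) bcC c] bc d
      unfolding isglb_def by blast+
    hence "ext_le J d ?ab" using ab d unfolding isglb_def by blast
    thus ?thesis using t d \<open>ext_le J d c\<close> unfolding isglb_def by blast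
  qed
  have "isglb L J M a ?bc ?t" unfolding isglb_def using tC 1 4 5 by blast
  thus ?thesis using inf_eq by simp
qed

lemma absorb1: assumes a: "a \<in> ext_carrier L J M" and b: "b \<in> ext_carrier L J M"
  shows "ext_inf L J M (ext_sup L J M a b) b = b"
  using sup_lub[OF a b] xle_refl[OF b] b by (intro inf_eq) (auto simp: islub_def isglb_def)

lemma absorb2: assumes a: "a \<in> ext_carrier L J M" and b: "b \<in> ext_carrier L J M"
  shows "ext_sup L J M (ext_inf L J M a b) b = b"
  using inf_glb[OF a b] xle_refl[OF b] b by (intro sup_eq) (auto simp: islub_def isglb_def)

lemma sup_Top: "Top \<in> ext_carrier L J M \<Longrightarrow> ext_sup L J M Top c = Top"
  by (intro sup_eq) (auto simp: islub_def)

lemma inf_Bot: "Bot \<in> ext_carrier L J M \<Longrightarrow> ext_inf L J M Bot c = Bot"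
  by (intro inf_eq) (auto simp: isglb_def)

lemma sup_not_Bot: "x \<in> L \<Longrightarrow> y \<in> L \<Longrightarrow> ext_sup L J M (Elt x) (Elt y) \<noteq> Bot"
  using sup_lub[of "Elt x" "Elt y"] by (auto simp: islub_def elt_in_C)

lemma inf_not_Top: "x \<in> L \<Longrightarrow> y \<in> L \<Longrightarrow> ext_inf L J M (Elt x) (Elt y) \<noteq> Top"
  using inf_glb[of "Elt x" "Elt y"] by (auto simp: isglb_def elt_in_C)

end

definition rep :: "'b set \<Rightarrow> 'b" where "rep A = (SOME x. x \<in> A)"
definition opt :: "'b set \<Rightarrow> 'b set option" where "opt S = (if S = {} then None else Some S)"
definition qcl where "qcl L J M E t = {z \<in> L. (t, Elt z) \<in> Theta L J M E}"

lemma QJ_eq: "A \<in> L // E \<Longrightarrow> B \<in> L // E \<Longrightarrow>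
  quot_join L J M E A B = opt (qcl L J M E (ext_sup L J M (Elt (rep A)) (Elt (rep B))))"
  by (simp add: quot_join_def Let_def qcl_def opt_def rep_def)

lemma QM_eq: "A \<in> L // E \<Longrightarrow> B \<in> L // E \<Longrightarrow>
  quot_meet L J M E A B = opt (qcl L J M E (ext_inf L J M (Elt (rep A)) (Elt (rep B))))"
  by (simp add: quot_meet_def Let_def qcl_def opt_def rep_def)

lemma QJ_out: "\<not> (A \<in> L // E \<and> B \<in> L // E) \<Longrightarrow> quot_join L J M E A B = None"
  unfolding quot_join_def by auto
lemma QM_out: "\<not> (A \<in> L // E \<and> B \<in> L // E) \<Longrightarrow> quot_meet L J M E A B = None"
  unfolding quot_meet_def by auto

context
  fixes L :: "'a set" and J M :: "'a \<Rightarrow> 'a \<Rightarrow> 'a option" and E :: "('a \<times> 'a) set"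
  assumes PL: "partial_lattice L J M" and EC: "E \<in> Con L J M"
begin

abbreviation "CC \<equiv> ext_carrier L J M"
abbreviation "TH \<equiv> Theta L J M E"
abbreviation "SS \<equiv> {T. ext_lattice_cong L J M T \<and> (\<lambda>(x, y). (Elt x, Elt y)) ` E \<subseteq> T}"

lemma eqE: "equiv L E" using EC unfolding Con_def by blast

lemma ThE: "(Elt x, Elt y) \<in> TH \<longleftrightarrow> (x, y) \<in> E"
  using EC unfolding Con_def by blast

lemma T0: "CC \<times> CC \<in> SS"
proof -
  have "equiv CC (CC \<times> CC)" by (auto simp: equiv_def refl_on_def sym_def trans_def)
  moreover have "(\<lambda>(x, y). (Elt x, Elt y)) ` E \<subseteq> CC \<times> CC"
    using equiv_type[OF eqE] by (auto simp: elt_in_C[OF PL])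
  ultimately show ?thesis unfolding ext_lattice_cong_def
    using sup_in[OF PL] inf_in[OF PL] by auto
qed

lemma Th_mem: "p \<in> TH \<longleftrightarrow> (\<forall>T\<in>SS. p \<in> T)"
  unfolding Theta_def by (rule Inter_iff)

lemma Th_sub: "(a, b) \<in> TH \<Longrightarrow> a \<in> CC \<and> b \<in> CC"
proof -
  assume "(a, b) \<in> TH"
  hence "\<forall>T\<in>SS. (a, b) \<in> T" by (simp only: Th_mem)
  hence "(a, b) \<in> CC \<times> CC" using T0 by (rule bspec)
  thus ?thesis by (simp only: mem_Sigma_iff)
qed

lemma cong_equiv: "ext_lattice_cong L J M T \<Longrightarrow> equiv CC T"
  by (simp add: ext_lattice_cong_def)

lemma cong_sup: "ext_lattice_cong L J M T \<Longrightarrow> (a, a') \<in> T \<Longrightarrow> (b, b') \<in> T \<Longrightarrow> (ext_sup L J M a b, ext_sup L J M a' b') \<in> T"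
  by (simp add: ext_lattice_cong_def)

lemma cong_inf: "ext_lattice_cong L J M T \<Longrightarrow> (a, a') \<in> T \<Longrightarrow> (b, b') \<in> T \<Longrightarrow> (ext_inf L J M a b, ext_inf L J M a' b') \<in> T"
  by (simp add: ext_lattice_cong_def)

lemma Th_refl: "a \<in> CC \<Longrightarrow> (a, a) \<in> TH"
  unfolding Th_mem by (auto dest!: cong_equiv simp: equiv_def refl_on_def)

lemma Th_sym: assumes "(a, b) \<in> TH" shows "(b, a) \<in> TH"
  unfolding Th_mem
proof
  fix T assume T: "T \<in> SS"
  hence "(a, b) \<in> T" using assms Th_mem by blast
  moreover have "sym T" using T cong_equiv equiv_def by blast
  ultimately show "(b, a) \<in> T" by (rule symD[rotated])
qed

lemma Th_trans: assumes "(a, b) \<in> TH" "(b, c) \<in> TH" shows "(a, c) \<in> TH"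
  unfolding Th_mem
proof
  fix T assume T: "T \<in> SS"
  hence "(a, b) \<in> T" "(b, c) \<in> T" using assms Th_mem by blast+
  moreover have "trans T" using T cong_equiv equiv_def by blast
  ultimately show "(a, c) \<in> T" by (meson transD)
qed

lemma Th_sup: "(a, a') \<in> TH \<Longrightarrow> (b, b') \<in> TH \<Longrightarrow> (ext_sup L J M a b, ext_sup L J M a' b') \<in> TH"
  unfolding Th_mem by (auto intro: cong_sup)

lemma Th_inf: "(a, a') \<in> TH \<Longrightarrow> (b, b') \<in> TH \<Longrightarrow> (ext_inf L J M a b, ext_inf L J M a' b') \<in> TH"
  unfolding Th_mem by (auto intro: cong_inf)

lemma qcl_resp: "(t, t') \<in> TH \<Longrightarrow> qcl L J M E t = qcl L J M E t'"
  unfolding qcl_def using Th_sym Th_trans by blast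

lemma rep_in: "A \<in> L // E \<Longrightarrow> rep A \<in> A"
proof -
  assume A: "A \<in> L // E"
  hence "\<exists>x. x \<in> A" using in_quotient_imp_non_empty[OF eqE] by blast
  thus ?thesis unfolding rep_def by (rule someI_ex)
qed

lemma rep_L: "A \<in> L // E \<Longrightarrow> rep A \<in> L"
  using rep_in in_quotient_imp_subset[OF eqE] by blast

lemma class_qcl: assumes A: "A \<in> L // E" shows "qcl L J M E (Elt (rep A)) = A"
proof (rule set_eqI)
  fix w
  have r: "rep A \<in> A" using rep_in A .
  show "w \<in> qcl L J M E (Elt (rep A)) \<longleftrightarrow> w \<in> A"
  proof
    assume "w \<in> qcl L J M E (Elt (rep A))"
    hence "(rep A, w) \<in> E" unfolding qcl_def using ThE by blast
    thus "w \<in> A" using in_quotient_imp_closed[OF eqE A r] by blast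
  next
    assume w: "w \<in> A"
    hence "(rep A, w) \<in> E" using in_quotient_imp_in_rel[OF eqE A] r by blast
    moreover have "w \<in> L" using w in_quotient_imp_subset[OF eqE A] by blast
    ultimately show "w \<in> qcl L J M E (Elt (rep A))" unfolding qcl_def using ThE by blast
  qed
qed

lemma qcl_class: assumes ne: "qcl L J M E t \<noteq> {}"
  shows "qcl L J M E t \<in> L // E" "(t, Elt (rep (qcl L J M E t))) \<in> TH"
proof -
  obtain u where u: "u \<in> qcl L J M E t" using ne by blast
  have uL: "u \<in> L" and tu: "(t, Elt u) \<in> TH" using u unfolding qcl_def by auto
  have "qcl L J M E t = qcl L J M E (Elt u)" using qcl_resp[OF tu] .
  also have "\<dots> = E `` {u}" unfolding qcl_def using ThE equiv_type[OF eqE] by auto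
  finally have eq: "qcl L J M E t = E `` {u}" .
  show "qcl L J M E t \<in> L // E" using eq uL by (simp add: quotientI)
  have "rep (qcl L J M E t) \<in> qcl L J M E t" unfolding rep_def using u by (metis someI_ex)
  thus "(t, Elt (rep (qcl L J M E t))) \<in> TH" unfolding qcl_def by auto
qed

lemma qcl_elt: "x \<in> L \<Longrightarrow> x \<in> qcl L J M E (Elt x)"
  unfolding qcl_def using Th_refl elt_in_C[OF PL] by blast

lemma sup_empty: assumes x: "x \<in> L" and y: "y \<in> L" and e: "qcl L J M E (ext_sup L J M (Elt x) (Elt y)) = {}"
  shows "ext_sup L J M (Elt x) (Elt y) = Top"
proof -
  have C: "ext_sup L J M (Elt x) (Elt y) \<in> CC" using sup_in[OF PL] x y elt_in_C[OF PL] by blast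
  show ?thesis using C
  proof (rule C_cases[OF PL])
    assume "ext_sup L J M (Elt x) (Elt y) = Bot" thus ?thesis using sup_not_Bot[OF PL x y] by blast
  next
    fix z assume "ext_sup L J M (Elt x) (Elt y) = Elt z" "z \<in> L"
    thus ?thesis using e qcl_elt by auto
  qed
qed

lemma inf_empty: assumes x: "x \<in> L" and y: "y \<in> L" and e: "qcl L J M E (ext_inf L J M (Elt x) (Elt y)) = {}"
  shows "ext_inf L J M (Elt x) (Elt y) = Bot"
proof -
  have C: "ext_inf L J M (Elt x) (Elt y) \<in> CC" using inf_in[OF PL] x y elt_in_C[OF PL] by blast
  show ?thesis using C
  proof (rule C_cases[OF PL])
    assume "ext_inf L J M (Elt x) (Elt y) = Top" thus ?thesis using inf_not_Top[OF PL x y] by blast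
  next
    fix z assume "ext_inf L J M (Elt x) (Elt y) = Elt z" "z \<in> L"
    thus ?thesis using e qcl_elt by auto
  qed
qed

lemma rep_C: "A \<in> L // E \<Longrightarrow> Elt (rep A) \<in> CC"
  using rep_L elt_in_C[OF PL] by blast

lemma QJ_in: assumes A: "A \<in> L // E" and B: "B \<in> L // E" and h: "quot_join L J M E A B = Some Z" shows "Z \<in> L // E"
proof -
  have "opt (qcl L J M E (ext_sup L J M (Elt (rep A)) (Elt (rep B)))) = Some Z" using h QJ_eq[OF A B] by simp
  hence "qcl L J M E (ext_sup L J M (Elt (rep A)) (Elt (rep B))) \<noteq> {}" "Z = qcl L J M E (ext_sup L J M (Elt (rep A)) (Elt (rep B)))"
    by (simp_all add: opt_def split: if_splits)
  thus ?thesis using qcl_class(1) by simp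
qed

lemma QM_in: assumes A: "A \<in> L // E" and B: "B \<in> L // E" and h: "quot_meet L J M E A B = Some Z" shows "Z \<in> L // E"
proof -
  have "opt (qcl L J M E (ext_inf L J M (Elt (rep A)) (Elt (rep B)))) = Some Z" using h QM_eq[OF A B] by simp
  hence "qcl L J M E (ext_inf L J M (Elt (rep A)) (Elt (rep B))) \<noteq> {}" "Z = qcl L J M E (ext_inf L J M (Elt (rep A)) (Elt (rep B)))"
    by (simp_all add: opt_def split: if_splits)
  thus ?thesis using qcl_class(1) by simp
qed

lemma QJ_idem: assumes A: "A \<in> L // E" shows "quot_join L J M E A A = Some A"
proof -
  have "quot_join L J M E A A = opt A"
    using QJ_eq[OF A A] sup_idem[OF PL rep_C[OF A]] class_qcl[OF A] by simp
  moreover have "A \<noteq> {}" using in_quotient_imp_non_empty[OF eqE A] .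
  ultimately show ?thesis unfolding opt_def by simp
qed

lemma QM_idem: assumes A: "A \<in> L // E" shows "quot_meet L J M E A A = Some A"
proof -
  have "quot_meet L J M E A A = opt A"
    using QM_eq[OF A A] inf_idem[OF PL rep_C[OF A]] class_qcl[OF A] by simp
  moreover have "A \<noteq> {}" using in_quotient_imp_non_empty[OF eqE A] .
  ultimately show ?thesis unfolding opt_def by simp
qed

lemma QJ_comm: "quot_join L J M E A B = quot_join L J M E B A"
proof (cases "A \<in> L // E \<and> B \<in> L // E")
  case True thus ?thesis using QJ_eq[of A L E B J M] QJ_eq[of B L E A J M] sup_comm[OF PL rep_C rep_C, of A B] by simp
next
  case False thus ?thesis unfolding quot_join_def by auto
qed

lemma QM_comm: "quot_meet L J M E A B = quot_meet L J M E B A"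
proof (cases "A \<in> L // E \<and> B \<in> L // E")
  case True thus ?thesis using QM_eq[of A L E B J M] QM_eq[of B L E A J M] inf_comm[OF PL rep_C rep_C, of A B] by simp
next
  case False thus ?thesis unfolding quot_meet_def by auto
qed

lemma QJ_assoc1: assumes A: "A \<in> L // E" and B: "B \<in> L // E" and C: "Cc \<in> L // E"
  shows "Option.bind (quot_join L J M E A B) (\<lambda>U. quot_join L J M E U Cc)
    = opt (qcl L J M E (ext_sup L J M (ext_sup L J M (Elt (rep A)) (Elt (rep B))) (Elt (rep Cc))))"
proof -
  let ?s = "ext_sup L J M (Elt (rep A)) (Elt (rep B))"
  let ?z = "Elt (rep Cc)"
  show ?thesis
  proof (cases "qcl L J M E ?s = {}")
    case True
    hence s: "?s = Top" using sup_empty rep_L A B by blast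
    have "Top \<in> CC" using sup_in[OF PL rep_C[OF A] rep_C[OF B]] s by simp
    hence "ext_sup L J M ?s ?z = Top" using s sup_Top[OF PL] by simp
    thus ?thesis using True QJ_eq[OF A B] s unfolding opt_def by simp
  next
    case False
    let ?U = "qcl L J M E ?s"
    have U: "?U \<in> L // E" and sU: "(?s, Elt (rep ?U)) \<in> TH" using qcl_class[OF False] by auto
    have QAB: "quot_join L J M E A B = Some ?U" using QJ_eq[OF A B] False unfolding opt_def by simp
    have "(ext_sup L J M ?s ?z, ext_sup L J M (Elt (rep ?U)) ?z) \<in> TH"
      using Th_sup[OF sU Th_refl[OF rep_C[OF C]]] .
    hence "qcl L J M E (ext_sup L J M (Elt (rep ?U)) ?z) = qcl L J M E (ext_sup L J M ?s ?z)"
      using qcl_resp by metis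
    thus ?thesis using QAB QJ_eq[OF U C] by simp
  qed
qed

lemma QM_assoc1: assumes A: "A \<in> L // E" and B: "B \<in> L // E" and C: "Cc \<in> L // E"
  shows "Option.bind (quot_meet L J M E A B) (\<lambda>U. quot_meet L J M E U Cc)
    = opt (qcl L J M E (ext_inf L J M (ext_inf L J M (Elt (rep A)) (Elt (rep B))) (Elt (rep Cc))))"
proof -
  let ?s = "ext_inf L J M (Elt (rep A)) (Elt (rep B))"
  let ?z = "Elt (rep Cc)"
  show ?thesis
  proof (cases "qcl L J M E ?s = {}")
    case True
    hence s: "?s = Bot" using inf_empty rep_L A B by blast
    have "Bot \<in> CC" using inf_in[OF PL rep_C[OF A] rep_C[OF B]] s by simp
    hence "ext_inf L J M ?s ?z = Bot" using s inf_Bot[OF PL] by simp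
    thus ?thesis using True QM_eq[OF A B] s unfolding opt_def by simp
  next
    case False
    let ?U = "qcl L J M E ?s"
    have U: "?U \<in> L // E" and sU: "(?s, Elt (rep ?U)) \<in> TH" using qcl_class[OF False] by auto
    have QAB: "quot_meet L J M E A B = Some ?U" using QM_eq[OF A B] False unfolding opt_def by simp
    have "(ext_inf L J M ?s ?z, ext_inf L J M (Elt (rep ?U)) ?z) \<in> TH"
      using Th_inf[OF sU Th_refl[OF rep_C[OF C]]] .
    hence "qcl L J M E (ext_inf L J M (Elt (rep ?U)) ?z) = qcl L J M E (ext_inf L J M ?s ?z)"
      using qcl_resp by metis
    thus ?thesis using QAB QM_eq[OF U C] by simp
  qed
qed

lemma QJ_assoc: assumes A: "A \<in> L // E" and B: "B \<in> L // E" and C: "Cc \<in> L // E"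
  shows "Option.bind (quot_join L J M E A B) (\<lambda>U. quot_join L J M E U Cc)
       = Option.bind (quot_join L J M E B Cc) (\<lambda>V. quot_join L J M E A V)"
proof -
  have "Option.bind (quot_join L J M E B Cc) (\<lambda>V. quot_join L J M E A V)
      = Option.bind (quot_join L J M E B Cc) (\<lambda>V. quot_join L J M E V A)"
  proof -
    have "(\<lambda>V. quot_join L J M E A V) = (\<lambda>V. quot_join L J M E V A)" by (rule ext) (rule QJ_comm)
    thus ?thesis by simp
  qed
  also have "\<dots> = opt (qcl L J M E (ext_sup L J M (ext_sup L J M (Elt (rep B)) (Elt (rep Cc))) (Elt (rep A))))"
    using QJ_assoc1[OF B C A] .
  also have "ext_sup L J M (ext_sup L J M (Elt (rep B)) (Elt (rep Cc))) (Elt (rep A))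
      = ext_sup L J M (ext_sup L J M (Elt (rep A)) (Elt (rep B))) (Elt (rep Cc))"
  proof -
    have a: "Elt (rep A) \<in> CC" and b: "Elt (rep B) \<in> CC" and c: "Elt (rep Cc) \<in> CC"
      using rep_C A B C by auto
    have "ext_sup L J M (ext_sup L J M (Elt (rep B)) (Elt (rep Cc))) (Elt (rep A))
       = ext_sup L J M (Elt (rep A)) (ext_sup L J M (Elt (rep B)) (Elt (rep Cc)))"
      using sup_comm[OF PL sup_in[OF PL b c] a] .
    also have "\<dots> = ext_sup L J M (ext_sup L J M (Elt (rep A)) (Elt (rep B))) (Elt (rep Cc))"
      using sup_assoc[OF PL a b c] by simp
    finally show ?thesis .
  qed
  finally show ?thesis using QJ_assoc1[OF A B C] by simp
qed

lemma QM_assoc: assumes A: "A \<in> L // E" and B: "B \<in> L // E" and C: "Cc \<in> L // E"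
  shows "Option.bind (quot_meet L J M E A B) (\<lambda>U. quot_meet L J M E U Cc)
       = Option.bind (quot_meet L J M E B Cc) (\<lambda>V. quot_meet L J M E A V)"
proof -
  have "Option.bind (quot_meet L J M E B Cc) (\<lambda>V. quot_meet L J M E A V)
      = Option.bind (quot_meet L J M E B Cc) (\<lambda>V. quot_meet L J M E V A)"
  proof -
    have "(\<lambda>V. quot_meet L J M E A V) = (\<lambda>V. quot_meet L J M E V A)" by (rule ext) (rule QM_comm)
    thus ?thesis by simp
  qed
  also have "\<dots> = opt (qcl L J M E (ext_inf L J M (ext_inf L J M (Elt (rep B)) (Elt (rep Cc))) (Elt (rep A))))"
    using QM_assoc1[OF B C A] .
  also have "ext_inf L J M (ext_inf L J M (Elt (rep B)) (Elt (rep Cc))) (Elt (rep A))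
      = ext_inf L J M (ext_inf L J M (Elt (rep A)) (Elt (rep B))) (Elt (rep Cc))"
  proof -
    have a: "Elt (rep A) \<in> CC" and b: "Elt (rep B) \<in> CC" and c: "Elt (rep Cc) \<in> CC"
      using rep_C A B C by auto
    have "ext_inf L J M (ext_inf L J M (Elt (rep B)) (Elt (rep Cc))) (Elt (rep A))
       = ext_inf L J M (Elt (rep A)) (ext_inf L J M (Elt (rep B)) (Elt (rep Cc)))"
      using inf_comm[OF PL inf_in[OF PL b c] a] .
    also have "\<dots> = ext_inf L J M (ext_inf L J M (Elt (rep A)) (Elt (rep B))) (Elt (rep Cc))"
      using inf_assoc[OF PL a b c] by simp
    finally show ?thesis .
  qed
  finally show ?thesis using QM_assoc1[OF A B C] by simp
qed

lemma QJ_dual: assumes A: "A \<in> L // E" and B: "B \<in> L // E" and h: "quot_join L J M E A B = Some A"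
  shows "quot_meet L J M E A B = Some B"
proof -
  let ?x = "Elt (rep A)" let ?y = "Elt (rep B)"
  have "opt (qcl L J M E (ext_sup L J M ?x ?y)) = Some A" using h QJ_eq[OF A B] by simp
  hence "qcl L J M E (ext_sup L J M ?x ?y) = A" by (simp add: opt_def split: if_splits)
  hence "(ext_sup L J M ?x ?y, ?x) \<in> TH" using rep_in[OF A] unfolding qcl_def by blast
  hence "(ext_inf L J M (ext_sup L J M ?x ?y) ?y, ext_inf L J M ?x ?y) \<in> TH"
    using Th_inf Th_refl[OF rep_C[OF B]] by blast
  hence "(?y, ext_inf L J M ?x ?y) \<in> TH" using absorb1[OF PL rep_C[OF A] rep_C[OF B]] by simp
  hence "qcl L J M E ?y = qcl L J M E (ext_inf L J M ?x ?y)" by (rule qcl_resp)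
  hence "qcl L J M E (ext_inf L J M ?x ?y) = B" using class_qcl[OF B] by simp
  thus ?thesis using QM_eq[OF A B] in_quotient_imp_non_empty[OF eqE B] unfolding opt_def by simp
qed

lemma QM_dual: assumes A: "A \<in> L // E" and B: "B \<in> L // E" and h: "quot_meet L J M E A B = Some A"
  shows "quot_join L J M E A B = Some B"
proof -
  let ?x = "Elt (rep A)" let ?y = "Elt (rep B)"
  have "opt (qcl L J M E (ext_inf L J M ?x ?y)) = Some A" using h QM_eq[OF A B] by simp
  hence "qcl L J M E (ext_inf L J M ?x ?y) = A" by (simp add: opt_def split: if_splits)
  hence "(ext_inf L J M ?x ?y, ?x) \<in> TH" using rep_in[OF A] unfolding qcl_def by blast
  hence "(ext_sup L J M (ext_inf L J M ?x ?y) ?y, ext_sup L J M ?x ?y) \<in> TH"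
    using Th_sup Th_refl[OF rep_C[OF B]] by blast
  hence "(?y, ext_sup L J M ?x ?y) \<in> TH" using absorb2[OF PL rep_C[OF A] rep_C[OF B]] by simp
  hence "qcl L J M E ?y = qcl L J M E (ext_sup L J M ?x ?y)" by (rule qcl_resp)
  hence "qcl L J M E (ext_sup L J M ?x ?y) = B" using class_qcl[OF B] by simp
  thus ?thesis using QJ_eq[OF A B] in_quotient_imp_non_empty[OF eqE B] unfolding opt_def by simp
qed

end

theorem mainTheorem7:
  fixes L :: "'a set" and J M :: "'a \<Rightarrow> 'a \<Rightarrow> 'a option" and E :: "('a \<times> 'a) set"
  assumes "partial_lattice L J M"
    and "E \<in> Con L J M"
  shows "partial_lattice (L // E) (quot_join L J M E) (quot_meet L J M E)"
  unfolding partial_lattice_def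
proof (intro conjI)
  show "\<forall>x\<in>L // E. \<forall>y\<in>L // E. \<forall>z. quot_join L J M E x y = Some z \<longrightarrow> z \<in> L // E"
    using QJ_in[OF assms] by blast
  show "\<forall>x\<in>L // E. \<forall>y\<in>L // E. \<forall>z. quot_meet L J M E x y = Some z \<longrightarrow> z \<in> L // E"
    using QM_in[OF assms] by blast
  show "\<forall>x\<in>L // E. quot_join L J M E x x = Some x" using QJ_idem[OF assms] by blast
  show "\<forall>x\<in>L // E. quot_meet L J M E x x = Some x" using QM_idem[OF assms] by blast
  show "\<forall>x\<in>L // E. \<forall>y\<in>L // E. quot_join L J M E x y = quot_join L J M E y x"
    using QJ_comm[OF assms] by blast
  show "\<forall>x\<in>L // E. \<forall>y\<in>L // E. quot_meet L J M E x y = quot_meet L J M E y x"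
    using QM_comm[OF assms] by blast
  show "\<forall>x\<in>L // E. \<forall>y\<in>L // E. \<forall>z\<in>L // E.
        Option.bind (quot_join L J M E x y) (\<lambda>u. quot_join L J M E u z) =
        Option.bind (quot_join L J M E y z) (\<lambda>v. quot_join L J M E x v)"
    using QJ_assoc[OF assms] by blast
  show "\<forall>x\<in>L // E. \<forall>y\<in>L // E. \<forall>z\<in>L // E.
        Option.bind (quot_meet L J M E x y) (\<lambda>u. quot_meet L J M E u z) =
        Option.bind (quot_meet L J M E y z) (\<lambda>v. quot_meet L J M E x v)"
    using QM_assoc[OF assms] by blast
  show "\<forall>a\<in>L // E. \<forall>b\<in>L // E. quot_join L J M E a b = Some a \<longrightarrow> quot_meet L J M E a b = Some b"
    using QJ_dual[OF assms] by blast
  show "\<forall>a\<in>L // E. \<forall>b\<in>L // E. quot_meet L J M E a b = Some a \<longrightarrow> quot_join L J M E a b = Some b"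
    using QM_dual[OF assms] by blast
qed

end
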